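(* Let $D$ be an $n\times n$ distance matrix and let $q_0$ be the smallest $q\in\mathbb N$ such that $D^{(q)}=D$. Then every graph realisation $(G=(V,E),\Phi)$ of $D$ satisfies $|V|\ge n+(q_0-1)$.
   Context: $[n]=\{1,\dots,n\}$. An $n\times n$ matrix $D$ with non-negative integer entries is a distance matrix if (i) $D_{ii}=0$ for all $i$ and $D_{ij}>0$ for all $i\ne j$; (ii) $D$ is symmetric; (iii) $D_{iw}+D_{wj}\ge D_{ij}$ for all $i,j,w\in[n]$. For $q\in\mathbb N$, the $q$-skeleton $G^q$ of $D$ is the edge-weighted graph with vertex set $[n]$ having an edge $\{i,j\}$ ($i<j$) if and only if $D_{ij}\le q$, this edge having weight (length) $D_{ij}$. $D^{(q)}$ denotes the $n\times n$ matrix whose $(i,j)$ entry is the weighted shortest-path distance between $i$ and $j$ in $G^q$ (equal to $\infty$ if no path exists). A graph realisation of $D$ is a pair $(G,\Phi)$, where $G=(V,E)$ is a finite simple undirected unweighted graph and $\Phi:[n]\to V$ is an injective map such that $d_G(\Phi(i),\Phi(j))=D_{ij}$ for all $i,j\in[n]$; here $d_G$ denotes the shortest-path distance in $G$ (equal to $\infty$ if no path exists). *)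

theory Defs
  imports Main "HOL-Library.Extended_Nat"
begin

text \<open>Matrices are functions nat \<Rightarrow> nat \<Rightarrow> nat, indexed by [n] = {1..n}.\<close>

definition distance_matrix :: "nat \<Rightarrow> (nat \<Rightarrow> nat \<Rightarrow> nat) \<Rightarrow> bool" where
  "distance_matrix n D \<longleftrightarrow>
     (\<forall>i\<in>{1..n}. D i i = 0) \<and>
     (\<forall>i\<in>{1..n}. \<forall>j\<in>{1..n}. i \<noteq> j \<longrightarrow> D i j > 0) \<and>
     (\<forall>i\<in>{1..n}. \<forall>j\<in>{1..n}. D i j = D j i) \<and>
     (\<forall>i\<in>{1..n}. \<forall>j\<in>{1..n}. \<forall>w\<in>{1..n}. D i w + D w j \<ge> D i j)"

text \<open>Weighted shortest-path distance in the q-skeleton G^q (infinity if no path).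
  Walks are lists of vertices of [n]; consecutive vertices must be distinct and
  joined by an edge of G^q, i.e. have D-value at most q.\<close>
definition skel_dist :: "nat \<Rightarrow> (nat \<Rightarrow> nat \<Rightarrow> nat) \<Rightarrow> nat \<Rightarrow> nat \<Rightarrow> nat \<Rightarrow> enat" where
  "skel_dist n D q i j = Inf {enat (\<Sum>k<length xs - 1. D (xs!k) (xs!(k+1))) | xs.
      xs \<noteq> [] \<and> hd xs = i \<and> last xs = j \<and> set xs \<subseteq> {1..n} \<and>
      (\<forall>k<length xs - 1. xs!k \<noteq> xs!(k+1) \<and> D (xs!k) (xs!(k+1)) \<le> q)}"

definition skel_eq :: "nat \<Rightarrow> (nat \<Rightarrow> nat \<Rightarrow> nat) \<Rightarrow> nat \<Rightarrow> bool" where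
  "skel_eq n D q \<longleftrightarrow> (\<forall>i\<in>{1..n}. \<forall>j\<in>{1..n}. skel_dist n D q i j = enat (D i j))"

definition simple_graph :: "'v set \<Rightarrow> 'v set set \<Rightarrow> bool" where
  "simple_graph V E \<longleftrightarrow> finite V \<and>
     (\<forall>e\<in>E. \<exists>a b. a \<noteq> b \<and> a \<in> V \<and> b \<in> V \<and> e = {a, b})"

definition graph_dist :: "'v set \<Rightarrow> 'v set set \<Rightarrow> 'v \<Rightarrow> 'v \<Rightarrow> enat" where
  "graph_dist V E u v = Inf {enat (length xs - 1) | xs.
      xs \<noteq> [] \<and> hd xs = u \<and> last xs = v \<and> set xs \<subseteq> V \<and>
      (\<forall>k<length xs - 1. {xs!k, xs!(k+1)} \<in> E)}"

definition graph_realisation ::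
  "nat \<Rightarrow> (nat \<Rightarrow> nat \<Rightarrow> nat) \<Rightarrow> 'v set \<Rightarrow> 'v set set \<Rightarrow> (nat \<Rightarrow> 'v) \<Rightarrow> bool" where
  "graph_realisation n D V E \<Phi> \<longleftrightarrow> simple_graph V E \<and>
     \<Phi> ` {1..n} \<subseteq> V \<and> inj_on \<Phi> {1..n} \<and>
     (\<forall>i\<in>{1..n}. \<forall>j\<in>{1..n}. graph_dist V E (\<Phi> i) (\<Phi> j) = enat (D i j))"

end

theory Submission imports Defs begin

lemma succ_nth: "successively P xs \<longleftrightarrow> (\<forall>k<length xs - 1. P (xs!k) (xs!(k+1)))"
proof (induction P xs rule: successively.induct)
  case (3 P x y xs)
  show ?case
    apply (simp add: 3)
    apply (auto simp: less_Suc_eq_0_disj nth_Cons split: nat.splits)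
    done
qed auto

lemma enat_Inf_in: "Inf (A::enat set) \<noteq> \<infinity> \<Longrightarrow> Inf A \<in> A"
  unfolding Inf_enat_def by (auto split: if_splits intro: LeastI)

fun wsum :: "(nat \<Rightarrow> nat \<Rightarrow> nat) \<Rightarrow> nat list \<Rightarrow> nat" where
  "wsum D (x#y#zs) = D x y + wsum D (y#zs)" | "wsum D _ = 0"

lemma wsum_eq: "(\<Sum>k<length xs - 1. D (xs!k) (xs!(k+1))) = wsum D xs"
proof (induction D xs rule: wsum.induct)
  case (1 D x y zs)
  have "(\<Sum>k<length (x#y#zs) - 1. D ((x#y#zs)!k) ((x#y#zs)!(k+1)))
      = (\<Sum>k<Suc (length zs). D ((x#y#zs)!k) ((x#y#zs)!(k+1)))" by simp
  also have "\<dots> = D x y + (\<Sum>k<length zs. D ((y#zs)!k) ((y#zs)!(k+1)))"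
    by (subst sum.lessThan_Suc_shift) simp
  finally show ?case using 1 by simp
qed auto

lemma wsum_app: "xs \<noteq> [] \<Longrightarrow> wsum D (xs @ v # ys) = wsum D (xs @ [v]) + wsum D (v # ys)"
proof (induction xs)
  case (Cons a xs) then show ?case by (cases xs) auto
qed simp

lemma skel_alt: "skel_dist n D q i j = Inf {enat (wsum D xs) | xs.
      xs \<noteq> [] \<and> hd xs = i \<and> last xs = j \<and> set xs \<subseteq> {1..n} \<and>
      successively (\<lambda>a b. a \<noteq> b \<and> D a b \<le> q) xs}"
  unfolding skel_dist_def wsum_eq succ_nth by simp

lemma graph_alt: "graph_dist V E u v = Inf {enat (length xs - 1) | xs.
      xs \<noteq> [] \<and> hd xs = u \<and> last xs = v \<and> set xs \<subseteq> V \<and>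
      successively (\<lambda>a b. {a,b} \<in> E) xs}"
  unfolding graph_dist_def succ_nth by simp


lemma succ_concat:
  assumes "successively P xs" "successively P ys" "xs \<noteq> []" "ys \<noteq> []" "last xs = hd ys"
  shows "successively P (butlast xs @ ys)"
proof -
  have xs: "xs = butlast xs @ [hd ys]" using assms by (metis append_butlast_last_id)
  have "successively P (butlast xs @ [hd ys])" using assms(1) xs by metis
  then have a: "successively P (butlast xs)" "butlast xs = [] \<or> P (last (butlast xs)) (hd ys)"
    by (auto simp: successively_append_iff)
  show ?thesis using a assms(2,4) by (auto simp: successively_append_iff)
qed

lemma succ_take: "successively P xs \<Longrightarrow> successively P (take k xs)"
  by (metis append_take_drop_id successively_append_iff)
lemma succ_drop: "successively P xs \<Longrightarrow> successively P (drop k xs)"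
  by (metis append_take_drop_id successively_append_iff)

lemma wsum_concat:
  assumes "xs \<noteq> []" "ys \<noteq> []" "last xs = hd ys"
  shows "wsum D (butlast xs @ ys) = wsum D xs + wsum D ys"
proof (cases "butlast xs = []")
  case True
  then have "xs = [hd ys]" using assms by (metis append_butlast_last_id append_Nil)
  then show ?thesis using True by simp
next
  case False
  have xs: "xs = butlast xs @ [hd ys]" using assms by (metis append_butlast_last_id)
  have ys: "ys = hd ys # tl ys" using assms by simp
  have "wsum D (butlast xs @ ys) = wsum D (butlast xs @ hd ys # tl ys)" using ys by metis
  also have "\<dots> = wsum D (butlast xs @ [hd ys]) + wsum D (hd ys # tl ys)"
    using False wsum_app by blast
  finally show ?thesis using xs ys by metis
qed

lemma dm_tri: "distance_matrix n D \<Longrightarrow> \<forall>i\<in>{1..n}. \<forall>j\<in>{1..n}. \<forall>w\<in>{1..n}. D i w + D w j \<ge> D i j"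
  unfolding distance_matrix_def by (elim conjE)
lemma dm_diag: "distance_matrix n D \<Longrightarrow> \<forall>i\<in>{1..n}. D i i = 0"
  unfolding distance_matrix_def by (elim conjE)

lemma wsum_lower:
  assumes "distance_matrix n D" "set xs \<subseteq> {1..n}" "xs \<noteq> []"
  shows "D (hd xs) (last xs) \<le> wsum D xs"
  using assms(2,3)
proof (induction xs)
  case (Cons x xs)
  note tri = dm_tri[OF assms(1)] and diag = dm_diag[OF assms(1)]
  show ?case
  proof (cases xs)
    case Nil
    then show ?thesis using diag Cons(2) by simp
  next
    case (Cons y zs)
    have IH: "D y (last (y#zs)) \<le> wsum D (y#zs)" using Cons.IH Cons.prems \<open>xs = y#zs\<close> by simp
    have "last (y#zs) \<in> set (y#zs)" by (rule last_in_set) simp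
    then have m: "x \<in> {1..n}" "y \<in> {1..n}" "last (y#zs) \<in> {1..n}"
      using Cons.prems \<open>xs = y#zs\<close> by auto
    have "D x (last (y#zs)) \<le> D x y + D y (last (y#zs))"
      using tri[rule_format, OF m(1) m(3) m(2)] .
    then show ?thesis using IH \<open>xs = y#zs\<close> by simp
  qed
qed simp

definition swalk :: "nat \<Rightarrow> (nat \<Rightarrow> nat \<Rightarrow> nat) \<Rightarrow> nat \<Rightarrow> nat list \<Rightarrow> bool" where
  "swalk n D q xs \<longleftrightarrow> xs \<noteq> [] \<and> set xs \<subseteq> {1..n} \<and> successively (\<lambda>a b. a \<noteq> b \<and> D a b \<le> q) xs"

definition gwalk :: "'v set \<Rightarrow> 'v set set \<Rightarrow> 'v list \<Rightarrow> bool" where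
  "gwalk V E xs \<longleftrightarrow> xs \<noteq> [] \<and> set xs \<subseteq> V \<and> successively (\<lambda>a b. {a,b} \<in> E) xs"

lemma skel_alt2: "skel_dist n D q i j = Inf {enat (wsum D xs) | xs. swalk n D q xs \<and> hd xs = i \<and> last xs = j}"
  unfolding skel_alt swalk_def by (rule arg_cong[where f=Inf]) blast

lemma graph_alt2: "graph_dist V E u v = Inf {enat (length xs - 1) | xs. gwalk V E xs \<and> hd xs = u \<and> last xs = v}"
  unfolding graph_alt gwalk_def by (rule arg_cong[where f=Inf]) blast

lemma skel_le: "swalk n D q xs \<Longrightarrow> skel_dist n D q (hd xs) (last xs) \<le> enat (wsum D xs)"
  unfolding skel_alt2 by (rule Inf_lower) blast

lemma graph_le: "gwalk V E xs \<Longrightarrow> graph_dist V E (hd xs) (last xs) \<le> enat (length xs - 1)"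
  unfolding graph_alt2 by (rule Inf_lower) blast

lemma skel_att: assumes "skel_dist n D q i j \<le> enat m"
  shows "\<exists>xs. swalk n D q xs \<and> hd xs = i \<and> last xs = j \<and> wsum D xs \<le> m"
proof -
  let ?A = "{enat (wsum D xs) | xs. swalk n D q xs \<and> hd xs = i \<and> last xs = j}"
  have "Inf ?A \<noteq> \<infinity>"
  proof
    assume "Inf ?A = \<infinity>"
    then show False using assms unfolding skel_alt2 by simp
  qed
  then have "Inf ?A \<in> ?A" by (rule enat_Inf_in)
  then obtain xs where xs: "swalk n D q xs \<and> hd xs = i \<and> last xs = j" and eq: "Inf ?A = enat (wsum D xs)"
    by blast
  have "enat (wsum D xs) \<le> enat m" using assms eq unfolding skel_alt2 by simp
  then show ?thesis using xs by auto
qed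

lemma graph_att: assumes "graph_dist V E u v \<le> enat m"
  shows "\<exists>xs. gwalk V E xs \<and> hd xs = u \<and> last xs = v \<and> length xs - 1 \<le> m"
proof -
  let ?A = "{enat (length xs - 1) | xs. gwalk V E xs \<and> hd xs = u \<and> last xs = v}"
  have "Inf ?A \<noteq> \<infinity>"
  proof
    assume "Inf ?A = \<infinity>"
    then show False using assms unfolding graph_alt2 by simp
  qed
  then have "Inf ?A \<in> ?A" by (rule enat_Inf_in)
  then obtain xs where xs: "gwalk V E xs \<and> hd xs = u \<and> last xs = v" and eq: "Inf ?A = enat (length xs - 1)"
    by blast
  have "enat (length xs - 1) \<le> enat m" using assms eq unfolding graph_alt2 by simp
  then show ?thesis using xs by auto
qed

lemma hd_concat: "xs \<noteq> [] \<Longrightarrow> ys \<noteq> [] \<Longrightarrow> last xs = hd ys \<Longrightarrow> hd (butlast xs @ ys) = hd xs"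
  by (cases xs) auto

lemma skel_trans:
  assumes "skel_dist n D q i w \<le> enat a" "skel_dist n D q w j \<le> enat b"
  shows "skel_dist n D q i j \<le> enat (a + b)"
proof -
  obtain xs where xs: "swalk n D q xs" "hd xs = i" "last xs = w" "wsum D xs \<le> a" using skel_att[OF assms(1)] by blast
  obtain ys where ys: "swalk n D q ys" "hd ys = w" "last ys = j" "wsum D ys \<le> b" using skel_att[OF assms(2)] by blast
  have ne: "xs \<noteq> []" "ys \<noteq> []" using xs ys unfolding swalk_def by auto
  have sw: "swalk n D q (butlast xs @ ys)"
  proof -
    have s1: "successively (\<lambda>a b. a \<noteq> b \<and> D a b \<le> q) (butlast xs @ ys)"
      by (rule succ_concat) (use xs ys ne in \<open>simp_all add: swalk_def\<close>)
    have "set (butlast xs) \<subseteq> set xs" by (meson in_set_butlastD subsetI)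
    then have "set (butlast xs @ ys) \<subseteq> {1..n}" using xs(1) ys(1) unfolding swalk_def by auto
    then show ?thesis using s1 ne unfolding swalk_def by simp
  qed
  have "skel_dist n D q (hd (butlast xs @ ys)) (last (butlast xs @ ys)) \<le> enat (wsum D (butlast xs @ ys))"
    by (rule skel_le[OF sw])
  moreover have "hd (butlast xs @ ys) = i" using hd_concat ne xs ys by metis
  moreover have "last (butlast xs @ ys) = j" using ne ys by simp
  moreover have "wsum D (butlast xs @ ys) \<le> a + b" using wsum_concat[of xs ys D] ne xs ys by simp
  ultimately show ?thesis using order_trans enat_ord_simps(1) by fastforce
qed

lemma graph_trans:
  assumes "graph_dist V E u w \<le> enat a" "graph_dist V E w v \<le> enat b"
  shows "graph_dist V E u v \<le> enat (a + b)"
proof -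
  obtain xs where xs: "gwalk V E xs" "hd xs = u" "last xs = w" "length xs - 1 \<le> a" using graph_att[OF assms(1)] by blast
  obtain ys where ys: "gwalk V E ys" "hd ys = w" "last ys = v" "length ys - 1 \<le> b" using graph_att[OF assms(2)] by blast
  have ne: "xs \<noteq> []" "ys \<noteq> []" using xs ys unfolding gwalk_def by auto
  have sw: "gwalk V E (butlast xs @ ys)"
  proof -
    have s1: "successively (\<lambda>a b. {a,b} \<in> E) (butlast xs @ ys)"
      by (rule succ_concat) (use xs ys ne in \<open>simp_all add: gwalk_def\<close>)
    have "set (butlast xs) \<subseteq> set xs" by (meson in_set_butlastD subsetI)
    then have "set (butlast xs @ ys) \<subseteq> V" using xs(1) ys(1) unfolding gwalk_def by auto
    then show ?thesis using s1 ne unfolding gwalk_def by simp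
  qed
  have "graph_dist V E (hd (butlast xs @ ys)) (last (butlast xs @ ys)) \<le> enat (length (butlast xs @ ys) - 1)"
    by (rule graph_le[OF sw])
  moreover have "hd (butlast xs @ ys) = u" using hd_concat ne xs ys by metis
  moreover have "last (butlast xs @ ys) = v" using ne ys by simp
  moreover have "length (butlast xs @ ys) - 1 \<le> a + b" using ne xs ys by (cases xs; cases ys) auto
  ultimately show ?thesis using order_trans enat_ord_simps(1) by fastforce
qed

lemma skel_lower:
  assumes "distance_matrix n D" "i \<in> {1..n}" "j \<in> {1..n}"
  shows "enat (D i j) \<le> skel_dist n D q i j"
  unfolding skel_alt2
proof (rule Inf_greatest)
  fix x assume "x \<in> {enat (wsum D xs) | xs. swalk n D q xs \<and> hd xs = i \<and> last xs = j}"
  then obtain xs where "swalk n D q xs" "hd xs = i" "last xs = j" "x = enat (wsum D xs)" by auto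
  then show "enat (D i j) \<le> x" using wsum_lower[OF assms(1), of xs] unfolding swalk_def by auto
qed

lemma graph_take:
  assumes "gwalk V E xs" "k < length xs"
  shows "graph_dist V E (hd xs) (xs!k) \<le> enat k"
proof -
  have g: "gwalk V E (take (Suc k) xs)" using assms succ_take unfolding gwalk_def
    by (auto dest: in_set_takeD)
  have "hd (take (Suc k) xs) = hd xs" using assms by (cases xs) auto
  moreover have "last (take (Suc k) xs) = xs!k" using assms by (simp add: take_Suc_conv_app_nth)
  ultimately show ?thesis using graph_le[OF g] assms by simp
qed

lemma graph_drop:
  assumes "gwalk V E xs" "k < length xs"
  shows "graph_dist V E (xs!k) (last xs) \<le> enat (length xs - 1 - k)"
proof -
  have g: "gwalk V E (drop k xs)" using assms succ_drop unfolding gwalk_def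
    by (auto dest: in_set_dropD)
  have "hd (drop k xs) = xs!k" using assms by (simp add: hd_drop_conv_nth)
  moreover have "last (drop k xs) = last xs" using assms by simp
  ultimately show ?thesis using graph_le[OF g] assms by simp
qed

lemma gr_parts:
  assumes "graph_realisation n D V E \<Phi>"
  shows "finite V" "\<Phi> ` {1..n} \<subseteq> V" "inj_on \<Phi> {1..n}"
    "\<And>i j. i \<in> {1..n} \<Longrightarrow> j \<in> {1..n} \<Longrightarrow> graph_dist V E (\<Phi> i) (\<Phi> j) = enat (D i j)"
  using assms unfolding graph_realisation_def simple_graph_def by blast+

theorem mainTheorem10:
  fixes n :: nat and D :: "nat \<Rightarrow> nat \<Rightarrow> nat" and q0 :: nat
    and V :: "'v set" and E :: "'v set set" and \<Phi> :: "nat \<Rightarrow> 'v"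
  assumes "distance_matrix n D"
    and "skel_eq n D q0"
    and "\<forall>q<q0. \<not> skel_eq n D q"
    and "graph_realisation n D V E \<Phi>"
  shows "int (card V) \<ge> int n + (int q0 - 1)"
proof -
  note gr = gr_parts[OF assms(4)]
  have cardn: "card (\<Phi> ` {1..n}) = n" using gr(3) by (simp add: card_image)
  have cn: "card (\<Phi> ` {1..n}) \<le> card V" by (rule card_mono[OF gr(1) gr(2)])
  show ?thesis
  proof (cases "q0 = 0")
    case True
    then show ?thesis using cardn cn by simp
  next
    case False
    define q where "q = q0 - 1"
    have "\<not> skel_eq n D q" using assms(3) False q_def by simp
    then obtain i j where ij: "i \<in> {1..n}" "j \<in> {1..n}" "skel_dist n D q i j \<noteq> enat (D i j)"
      unfolding skel_eq_def by blast
    have "\<not> skel_dist n D q i j \<le> enat (D i j)" using ij skel_lower[OF assms(1) ij(1,2), of q] by auto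
    define Bad where "Bad p \<longleftrightarrow> fst p \<in> {1..n} \<and> snd p \<in> {1..n} \<and>
        \<not> skel_dist n D q (fst p) (snd p) \<le> enat (D (fst p) (snd p))" for p
    have "Bad (i,j)" unfolding Bad_def using ij \<open>\<not> skel_dist n D q i j \<le> enat (D i j)\<close> by simp
    from ex_has_least_nat[of Bad "(i,j)" "\<lambda>p. D (fst p) (snd p)", OF this]
    obtain p where pB: "Bad p" and pmin: "\<forall>y. Bad y \<longrightarrow> D (fst p) (snd p) \<le> D (fst y) (snd y)" by blast
    obtain a b where pab: "p = (a,b)" by (cases p)
    have ab: "a \<in> {1..n}" "b \<in> {1..n}" and nb: "\<not> skel_dist n D q a b \<le> enat (D a b)"
      using pB pab unfolding Bad_def by auto
    have good: "skel_dist n D q x y \<le> enat (D x y)" if "x \<in> {1..n}" "y \<in> {1..n}" "D x y < D a b" for x y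
    proof (rule ccontr)
      assume "\<not> ?thesis"
      then have "Bad (x,y)" unfolding Bad_def using that by simp
      then show False using pmin pab that(3) by fastforce
    qed
    define d where "d = D a b"
    have "a \<noteq> b"
    proof
      assume "a = b"
      have "swalk n D q [a]" using ab unfolding swalk_def by simp
      from skel_le[OF this] have "skel_dist n D q a a \<le> enat 0" by simp
      moreover have "D a a = 0" using dm_diag[OF assms(1)] ab by simp
      ultimately show False using nb \<open>a = b\<close> by simp
    qed
    have "d > q"
    proof (rule ccontr)
      assume "\<not> d > q"
      then have "swalk n D q [a,b]" using ab \<open>a \<noteq> b\<close> unfolding swalk_def d_def by simp
      from skel_le[OF this] have "skel_dist n D q a b \<le> enat (D a b)" by simp
      then show False using nb by simp
    qed
    then have dq: "d \<ge> q0" using q_def False by simp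
    have gab: "graph_dist V E (\<Phi> a) (\<Phi> b) = enat d" using gr(4)[OF ab] d_def by simp
    then obtain xs where xs: "gwalk V E xs" "hd xs = \<Phi> a" "last xs = \<Phi> b" "length xs - 1 \<le> d"
      using graph_att[of V E "\<Phi> a" "\<Phi> b" d] by auto
    have "enat d \<le> enat (length xs - 1)" using graph_le[OF xs(1)] xs(2,3) gab by simp
    then have len: "length xs = d + 1" using xs(4) gwalk_def xs(1) by (cases xs) auto
    have d1: "graph_dist V E (\<Phi> a) (xs!k) \<le> enat k" if "k \<le> d" for k
      using graph_take[OF xs(1), of k] xs(2) len that by simp
    have d2: "graph_dist V E (xs!k) (\<Phi> b) \<le> enat (d - k)" if "k \<le> d" for k
      using graph_drop[OF xs(1), of k] xs(3) len that by simp
    have noteq: "xs!k1 \<noteq> xs!k2" if "k1 < k2" "k2 \<le> d" for k1 k2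
    proof
      assume eq: "xs!k1 = xs!k2"
      have "graph_dist V E (\<Phi> a) (\<Phi> b) \<le> enat (k1 + (d - k2))"
      proof -
        have e1: "graph_dist V E (\<Phi> a) (xs!k2) \<le> enat k1" using d1[of k1] eq that by simp
        show ?thesis by (rule graph_trans[OF e1 d2[of k2]]) (use that in simp)
      qed
      then show False using gab that by simp
    qed
    have inj: "inj_on (\<lambda>k. xs!k) {1..<d}"
    proof (rule inj_onI)
      fix k1 k2 assume "k1 \<in> {1..<d}" "k2 \<in> {1..<d}" "xs!k1 = xs!k2"
      then show "k1 = k2" using noteq[of k1 k2] noteq[of k2 k1] by (metis atLeastLessThan_iff less_imp_le_nat linorder_neqE_nat)
    qed
    have disj: "\<Phi> ` {1..n} \<inter> (\<lambda>k. xs!k) ` {1..<d} = {}"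
    proof (rule ccontr)
      assume "\<not> ?thesis"
      then obtain w k where w: "w \<in> {1..n}" "k \<in> {1..<d}" "\<Phi> w = xs!k" by blast
      have "enat (D a w) \<le> enat k" using gr(4)[OF ab(1) w(1)] d1[of k] w by simp
      then have aw: "D a w \<le> k" by simp
      have "enat (D w b) \<le> enat (d - k)" using gr(4)[OF w(1) ab(2)] d2[of k] w by simp
      then have wb: "D w b \<le> d - k" by simp
      have s1: "skel_dist n D q a w \<le> enat (D a w)" using good[OF ab(1) w(1)] aw w(2) d_def by simp
      have "D w b < D a b" using wb w(2) d_def by auto
      then have s2: "skel_dist n D q w b \<le> enat (D w b)" using good[OF w(1) ab(2)] by simp
      have "skel_dist n D q a b \<le> enat (D a w + D w b)" by (rule skel_trans[OF s1 s2])
      moreover have "D a w + D w b \<le> d" using aw wb w(2) by auto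
      ultimately have "skel_dist n D q a b \<le> enat d" using order_trans enat_ord_simps(1) by fastforce
      then show False using nb d_def by simp
    qed
    have sub: "\<Phi> ` {1..n} \<union> (\<lambda>k. xs!k) ` {1..<d} \<subseteq> V"
    proof -
      have "(\<lambda>k. xs!k) ` {1..<d} \<subseteq> set xs" using len by auto
      then show ?thesis using gr(2) xs(1) unfolding gwalk_def by auto
    qed
    have "card (\<Phi> ` {1..n} \<union> (\<lambda>k. xs!k) ` {1..<d}) = n + (d - 1)"
      using card_Un_disjoint[OF _ _ disj] cardn card_image[OF inj] by simp
    moreover have "card (\<Phi> ` {1..n} \<union> (\<lambda>k. xs!k) ` {1..<d}) \<le> card V"
      by (rule card_mono[OF gr(1) sub])
    ultimately show ?thesis using dq False by linarith
  qed
qed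

end
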